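(* Let $Y\in\{0,1\}$, $Z$ and $S\in\mathbb R$ be random variables on a common probability space such that $Z\perp S\mid Y$, and suppose there exists $a\in\mathbb R$ with $\mathbb P(S\le a\mid Y=1)\neq\mathbb P(S\le a\mid Y=0)$. Then $S$ is a perfect surrogate: for any measurable function $g$ of $Z$, if $Z\perp S\mid g(Z)$, then $Z\perp Y\mid g(Z)$.
   Context: A surrogate variable $S$ for $Y$ is called perfect if for every measurable function $g$ of $Z$, $Z\perp S\mid g(Z)$ implies $Z\perp Y\mid g(Z)$. *)

theory Defs
  imports "HOL-Probability.Probability"
begin

definition cond_indep ::
  "'a measure \<Rightarrow> 'x measure \<Rightarrow> ('a \<Rightarrow> 'x) \<Rightarrow> 'v measure \<Rightarrow> ('a \<Rightarrow> 'v)
     \<Rightarrow> 'w measure \<Rightarrow> ('a \<Rightarrow> 'w) \<Rightarrow> bool" where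
  "cond_indep M MX X MV V MW W \<longleftrightarrow>
     (\<forall>A\<in>sets MX. \<forall>B\<in>sets MV.
        AE \<omega> in M.
          real_cond_exp M (vimage_algebra (space M) W MW)
             (\<lambda>\<omega>. indicator (X -` A \<inter> space M) \<omega> * indicator (V -` B \<inter> space M) \<omega>) \<omega>
          = real_cond_exp M (vimage_algebra (space M) W MW)
               (indicator (X -` A \<inter> space M)) \<omega>
            * real_cond_exp M (vimage_algebra (space M) W MW)
               (indicator (V -` B \<inter> space M)) \<omega>)"

end

theory Submission
  imports Defs
begin

lemma sfs:
  assumes "prob_space M" "W \<in> measurable M N"
  shows "sigma_finite_subalgebra M (vimage_algebra (space M) W N)"
proof -
  interpret prob_space M by fact
  have "subalgebra M (vimage_algebra (space M) W N)"
    unfolding subalgebra_def using sets_image_in_sets[OF refl assms(2)] by simp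
  then have "finite_measure_subalgebra M (vimage_algebra (space M) W N)"
    by (simp add: finite_measure_subalgebra_def finite_measure_subalgebra_axioms_def finite_measure_axioms)
  then show ?thesis by (rule finite_measure_subalgebra_is_sigma_finite)
qed

lemma int_ind2:
  assumes "prob_space M" "A \<in> sets M" "B \<in> sets M"
  shows "integrable M (\<lambda>x. indicator A x * (indicator B x :: real))"
proof -
  interpret prob_space M by fact
  show ?thesis
  proof (rule integrable_const_bound[where B=1])
    show "AE x in M. norm (indicator A x * (indicator B x :: real)) \<le> 1"
      by (auto simp: indicator_def)
    show "(\<lambda>x. indicator A x * (indicator B x :: real)) \<in> borel_measurable M"
      using assms by (intro borel_measurable_times borel_measurable_indicator)
  qed
qed

lemma L_int:
  assumes "prob_space M" "X \<in> measurable M MX" "V \<in> measurable M MV" "W \<in> measurable M MW"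
    "cond_indep M MX X MV V MW W" "A \<in> sets MX" "B \<in> sets MV"
  shows "(\<integral>\<omega>. indicator (X-`A\<inter>space M) \<omega> * indicator (V-`B\<inter>space M) \<omega> \<partial>M)
     = (\<integral>\<omega>. real_cond_exp M (vimage_algebra (space M) W MW) (indicator (V-`B\<inter>space M)) \<omega>
             * indicator (X-`A\<inter>space M) \<omega> \<partial>M)"
proof -
  interpret prob_space M by fact
  interpret sigma_finite_subalgebra M "vimage_algebra (space M) W MW" using sfs assms by blast
  let ?F = "vimage_algebra (space M) W MW"
  let ?iA = "indicator (X-`A\<inter>space M) :: 'a \<Rightarrow> real"
  let ?iB = "indicator (V-`B\<inter>space M) :: 'a \<Rightarrow> real"
  have mA: "X-`A\<inter>space M \<in> sets M" using assms measurable_sets by blast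
  have mB: "V-`B\<inter>space M \<in> sets M" using assms measurable_sets by blast
  have ae: "AE \<omega> in M. real_cond_exp M ?F (\<lambda>\<omega>. ?iA \<omega> * ?iB \<omega>) \<omega>
      = real_cond_exp M ?F ?iA \<omega> * real_cond_exp M ?F ?iB \<omega>"
    using assms(5,6,7) unfolding cond_indep_def by blast
  have iB: "integrable M ?iB" using mB by (simp add: integrable_indicator_iff emeasure_eq_measure)
  have "(\<integral>\<omega>. ?iA \<omega> * ?iB \<omega> \<partial>M) = (\<integral>\<omega>. real_cond_exp M ?F (\<lambda>\<omega>. ?iA \<omega> * ?iB \<omega>) \<omega> \<partial>M)"
    by (rule real_cond_exp_int(2)[symmetric]) (rule int_ind2[OF assms(1) mA mB])
  also have "\<dots> = (\<integral>\<omega>. real_cond_exp M ?F ?iA \<omega> * real_cond_exp M ?F ?iB \<omega> \<partial>M)"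
    by (rule integral_cong_AE) (use ae in auto)
  also have "\<dots> = (\<integral>\<omega>. real_cond_exp M ?F ?iB \<omega> * real_cond_exp M ?F ?iA \<omega> \<partial>M)"
    by (simp add: mult.commute)
  also have "\<dots> = (\<integral>\<omega>. real_cond_exp M ?F ?iB \<omega> * ?iA \<omega> \<partial>M)"
    by (rule real_cond_exp_intg(2))
       (auto intro!: integrable_real_mult_indicator mA real_cond_exp_int(1) iB borel_measurable_indicator)
  finally show ?thesis .
qed

lemma G_sets:
  assumes "Z \<in> measurable M MZ" "g \<in> measurable MZ MG"
    "C \<in> sets (vimage_algebra (space M) (g \<circ> Z) MG)"
  shows "\<exists>A'\<in>sets MZ. C = Z -` A' \<inter> space M"
proof -
  have gZ: "g \<circ> Z \<in> measurable M MG" by (rule measurable_comp[OF assms(1,2)])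
  have "g \<circ> Z \<in> space M \<rightarrow> space MG" by (auto intro: measurable_space[OF gZ])
  then have "C \<in> {(g \<circ> Z) -` A \<inter> space M | A. A \<in> sets MG}"
    using assms(3) by (simp add: sets_vimage_algebra2)
  then obtain D where D: "D \<in> sets MG" "C = (g \<circ> Z) -` D \<inter> space M"
    by blast
  have "g -` D \<inter> space MZ \<in> sets MZ" using measurable_sets[OF assms(2) D(1)] .
  moreover have "C = Z -` (g -` D \<inter> space MZ) \<inter> space M"
    using D(2) measurable_space[OF assms(1)] by auto
  ultimately show ?thesis by blast
qed

lemma L_core:
  fixes M :: "'a measure" and w :: "'a \<Rightarrow> real"
  assumes "prob_space M" "Z \<in> measurable M MZ" "g \<in> measurable MZ MG" "T \<in> sets M"
    "w \<in> borel_measurable (vimage_algebra (space M) (g \<circ> Z) MG)" "integrable M w"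
    "\<And>A. A \<in> sets MZ \<Longrightarrow> (\<integral>\<omega>. indicator (Z-`A\<inter>space M) \<omega> * indicator T \<omega> \<partial>M)
          = (\<integral>\<omega>. indicator (Z-`A\<inter>space M) \<omega> * w \<omega> \<partial>M)"
    "A \<in> sets MZ"
  shows "AE \<omega> in M. real_cond_exp M (vimage_algebra (space M) (g \<circ> Z) MG)
             (\<lambda>\<omega>. indicator (Z -` A \<inter> space M) \<omega> * indicator T \<omega>) \<omega>
          = real_cond_exp M (vimage_algebra (space M) (g \<circ> Z) MG)
               (indicator (Z -` A \<inter> space M)) \<omega>
            * real_cond_exp M (vimage_algebra (space M) (g \<circ> Z) MG)
               (indicator T) \<omega>"
proof -
  interpret prob_space M by fact
  have gZ: "g \<circ> Z \<in> measurable M MG" using assms(2,3) by (rule measurable_comp)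
  interpret sigma_finite_subalgebra M "vimage_algebra (space M) (g \<circ> Z) MG" using sfs[OF assms(1) gZ] .
  let ?G = "vimage_algebra (space M) (g \<circ> Z) MG"
  let ?iA = "indicator (Z-`A\<inter>space M) :: 'a \<Rightarrow> real"
  let ?iT = "indicator T :: 'a \<Rightarrow> real"
  have mA: "Z-`A\<inter>space M \<in> sets M" using measurable_sets[OF assms(2,8)] .
  have wM[measurable]: "w \<in> borel_measurable M" by (rule measurable_from_subalg[OF subalg assms(5)])
  have iT: "integrable M ?iT" using assms(4) by (simp add: integrable_indicator_iff emeasure_eq_measure)
  have iA: "integrable M ?iA" using mA by (simp add: integrable_indicator_iff emeasure_eq_measure)
  have iwA: "integrable M (\<lambda>\<omega>. w \<omega> * ?iA \<omega>)"
    by (rule integrable_real_mult_indicator[OF mA assms(6)])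
  have e1: "AE \<omega> in M. real_cond_exp M ?G ?iT \<omega> = w \<omega>"
  proof (rule real_cond_exp_charact)
    fix C assume "C \<in> sets ?G"
    then obtain A' where A': "A' \<in> sets MZ" "C = Z -` A' \<inter> space M" using G_sets[OF assms(2,3)] by blast
    show "(\<integral>x\<in>C. ?iT x \<partial>M) = (\<integral>x\<in>C. w x \<partial>M)"
      unfolding set_lebesgue_integral_def using assms(7)[OF A'(1)] A'(2) by simp
  qed (use iT assms(5,6) in auto)
  have e2: "AE \<omega> in M. real_cond_exp M ?G (\<lambda>\<omega>. ?iA \<omega> * ?iT \<omega>) \<omega>
      = real_cond_exp M ?G (\<lambda>\<omega>. w \<omega> * ?iA \<omega>) \<omega>"
  proof (rule real_cond_exp_charact)
    fix C assume C: "C \<in> sets ?G"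
    then obtain A' where A': "A' \<in> sets MZ" "C = Z -` A' \<inter> space M" using G_sets[OF assms(2,3)] by blast
    have A'A: "A' \<inter> A \<in> sets MZ" using A'(1) assms(8) by (rule sets.Int)
    have "(\<integral>x\<in>C. ?iA x * ?iT x \<partial>M) = (\<integral>x. indicator (Z-`(A' \<inter> A)\<inter>space M) x * ?iT x \<partial>M)"
      unfolding set_lebesgue_integral_def A'(2)
      by (rule Bochner_Integration.integral_cong) (auto simp: indicator_def)
    also have "\<dots> = (\<integral>x. indicator (Z-`(A' \<inter> A)\<inter>space M) x * w x \<partial>M)"
      by (rule assms(7)[OF A'A])
    also have "\<dots> = (\<integral>x\<in>C. w x * ?iA x \<partial>M)"
      unfolding set_lebesgue_integral_def A'(2)
      by (rule Bochner_Integration.integral_cong) (auto simp: indicator_def)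
    also have "\<dots> = (\<integral>x\<in>C. real_cond_exp M ?G (\<lambda>\<omega>. w \<omega> * ?iA \<omega>) x \<partial>M)"
      by (rule real_cond_exp_intA[OF iwA C])
    finally show "(\<integral>x\<in>C. ?iA x * ?iT x \<partial>M) = (\<integral>x\<in>C. real_cond_exp M ?G (\<lambda>\<omega>. w \<omega> * ?iA \<omega>) x \<partial>M)" .
  next
    show "integrable M (\<lambda>\<omega>. ?iA \<omega> * ?iT \<omega>)" by (rule int_ind2[OF assms(1) mA assms(4)])
  next
    show "integrable M (real_cond_exp M ?G (\<lambda>\<omega>. w \<omega> * ?iA \<omega>))" by (rule real_cond_exp_int(1)[OF iwA])
  next
    show "real_cond_exp M ?G (\<lambda>\<omega>. w \<omega> * ?iA \<omega>) \<in> borel_measurable ?G" by (rule borel_measurable_cond_exp)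
  qed
  have e3: "AE \<omega> in M. real_cond_exp M ?G (\<lambda>\<omega>. w \<omega> * ?iA \<omega>) \<omega> = w \<omega> * real_cond_exp M ?G ?iA \<omega>"
    by (rule real_cond_exp_mult) (auto simp: assms(5) iwA intro: borel_measurable_indicator mA)
  show ?thesis using e1 e2 e3 by eventually_elim simp
qed

lemma ratio:
  assumes "prob_space M" "E \<in> sets M" "Q \<in> sets M" "E \<subseteq> Q"
  shows "measure M E = (measure M E / measure M Q) * measure M Q"
proof (cases "measure M Q = 0")
  case True
  interpret prob_space M by fact
  have "measure M E \<le> measure M Q" using assms by (intro finite_measure_mono) auto
  then have "measure M E = 0" using True measure_nonneg[of M E] by linarith
  then show ?thesis by simp
qed simp

lemma stepA:
  fixes M :: "'a measure" and Y S :: "'a \<Rightarrow> real" and a :: real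
  assumes "prob_space M" "Y \<in> borel_measurable M" "\<forall>\<omega>\<in>space M. Y \<omega> \<in> {0, 1}"
    "S \<in> borel_measurable M"
  shows "AE x in M. real_cond_exp M (vimage_algebra (space M) Y borel) (indicator (S -` {..a} \<inter> space M)) x
     = \<P>(\<omega> in M. S \<omega> \<le> a \<bar> Y \<omega> = 0) * indicator (Y -` {0} \<inter> space M) x
       + \<P>(\<omega> in M. S \<omega> \<le> a \<bar> Y \<omega> = 1) * indicator (Y -` {1} \<inter> space M) x"
proof -
  interpret prob_space M by fact
  let ?Hy = "vimage_algebra (space M) Y borel"
  interpret sigma_finite_subalgebra M ?Hy using sfs[OF assms(1,2)] .
  define Bs where "Bs = S -` {..a} \<inter> space M"
  define Y0 where "Y0 = Y -` {0} \<inter> space M"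
  define Y1 where "Y1 = Y -` {1} \<inter> space M"
  define p0 where "p0 = \<P>(\<omega> in M. S \<omega> \<le> a \<bar> Y \<omega> = 0)"
  define p1 where "p1 = \<P>(\<omega> in M. S \<omega> \<le> a \<bar> Y \<omega> = 1)"
  have mBs: "Bs \<in> sets M" unfolding Bs_def using measurable_sets[OF assms(4)] by simp
  have mY0H: "Y0 \<in> sets ?Hy" unfolding Y0_def by (rule in_vimage_algebra) simp
  have mY1H: "Y1 \<in> sets ?Hy" unfolding Y1_def by (rule in_vimage_algebra) simp
  have mY0: "Y0 \<in> sets M" unfolding Y0_def using measurable_sets[OF assms(2)] by simp
  have mY1: "Y1 \<in> sets M" unfolding Y1_def using measurable_sets[OF assms(2)] by simp
  have p0e: "p0 = measure M (Bs \<inter> Y0) / measure M Y0"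
    unfolding p0_def cond_prob_def Bs_def Y0_def
    by (intro arg_cong2[where f="(/)"] arg_cong[where f="measure M"]) auto
  have p1e: "p1 = measure M (Bs \<inter> Y1) / measure M Y1"
    unfolding p1_def cond_prob_def Bs_def Y1_def
    by (intro arg_cong2[where f="(/)"] arg_cong[where f="measure M"]) auto
  have r0: "measure M (Bs \<inter> Y0) = p0 * measure M Y0"
    unfolding p0e by (rule ratio[OF assms(1)]) (use mBs mY0 in auto)
  have r1: "measure M (Bs \<inter> Y1) = p1 * measure M Y1"
    unfolding p1e by (rule ratio[OF assms(1)]) (use mBs mY1 in auto)
  have gH: "(\<lambda>x. p0 * indicator Y0 x + p1 * indicator Y1 x :: real) \<in> borel_measurable ?Hy"
    using mY0H mY1H by (intro borel_measurable_add borel_measurable_times borel_measurable_const borel_measurable_indicator)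
  have iY0: "integrable M (indicator Y0 :: 'a \<Rightarrow> real)" using mY0 by (simp add: integrable_indicator_iff emeasure_eq_measure)
  have iY1: "integrable M (indicator Y1 :: 'a \<Rightarrow> real)" using mY1 by (simp add: integrable_indicator_iff emeasure_eq_measure)
  have "AE x in M. real_cond_exp M ?Hy (indicator Bs) x = p0 * indicator Y0 x + p1 * indicator Y1 x"
  proof (rule real_cond_exp_charact)
    fix C assume C: "C \<in> sets ?Hy"
    have "Y \<in> space M \<rightarrow> space borel" by simp
    then have "C \<in> {Y -` D \<inter> space M | D. D \<in> sets borel}" using C by (simp add: sets_vimage_algebra2)
    then obtain D where D: "C = Y -` D \<inter> space M" by blast
    have CM: "C \<in> sets M" using C subalg unfolding subalgebra_def by blast
    have u: "C \<inter> Bs = (C \<inter> Bs \<inter> Y0) \<union> (C \<inter> Bs \<inter> Y1)"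
      using assms(3) unfolding Bs_def Y0_def Y1_def D by auto
    have "(\<integral>x\<in>C. indicator Bs x \<partial>M) = measure M (C \<inter> Bs)"
    proof -
      have "(\<integral>x\<in>C. indicator Bs x \<partial>M) = (\<integral>x. indicator (C \<inter> Bs) x \<partial>M)"
        unfolding set_lebesgue_integral_def
        by (rule Bochner_Integration.integral_cong) (auto simp: indicator_def)
      also have "\<dots> = measure M (C \<inter> Bs)" using CM mBs by (simp add: Int_absorb2 sets.sets_into_space Int_assoc)
      finally show ?thesis .
    qed
    also have "\<dots> = measure M (C \<inter> Bs \<inter> Y0) + measure M (C \<inter> Bs \<inter> Y1)"
      apply (subst u)
      apply (rule measure_Union)
      using CM mBs mY0 mY1 unfolding Y0_def Y1_def by auto
    also have "\<dots> = p0 * measure M (C \<inter> Y0) + p1 * measure M (C \<inter> Y1)"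
    proof -
      have a0: "measure M (C \<inter> Bs \<inter> Y0) = p0 * measure M (C \<inter> Y0)"
      proof (cases "0 \<in> D")
        case True
        then have "C \<inter> Bs \<inter> Y0 = Bs \<inter> Y0" "C \<inter> Y0 = Y0" unfolding D Y0_def Bs_def by auto
        then show ?thesis using r0 by simp
      next
        case False
        then have "C \<inter> Bs \<inter> Y0 = {}" "C \<inter> Y0 = {}" unfolding D Y0_def Bs_def by auto
        then show ?thesis by simp
      qed
      have a1: "measure M (C \<inter> Bs \<inter> Y1) = p1 * measure M (C \<inter> Y1)"
      proof (cases "1 \<in> D")
        case True
        then have "C \<inter> Bs \<inter> Y1 = Bs \<inter> Y1" "C \<inter> Y1 = Y1" unfolding D Y1_def Bs_def by auto
        then show ?thesis using r1 by simp
      next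
        case False
        then have "C \<inter> Bs \<inter> Y1 = {}" "C \<inter> Y1 = {}" unfolding D Y1_def Bs_def by auto
        then show ?thesis by simp
      qed
      show ?thesis using a0 a1 by simp
    qed
    also have "\<dots> = (\<integral>x. p0 * indicator (C \<inter> Y0) x + p1 * indicator (C \<inter> Y1) x \<partial>M)"
    proof -
      have i0: "integrable M (indicator (C \<inter> Y0) :: 'a \<Rightarrow> real)" using CM mY0
        by (simp add: integrable_indicator_iff emeasure_eq_measure sets.Int)
      have i1: "integrable M (indicator (C \<inter> Y1) :: 'a \<Rightarrow> real)" using CM mY1
        by (simp add: integrable_indicator_iff emeasure_eq_measure sets.Int)
      have s0: "C \<inter> Y0 \<inter> space M = C \<inter> Y0" "C \<inter> Y1 \<inter> space M = C \<inter> Y1"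
        unfolding Y0_def Y1_def by auto
      show ?thesis using i0 i1 s0 by simp
    qed
    also have "\<dots> = (\<integral>x\<in>C. p0 * indicator Y0 x + p1 * indicator Y1 x \<partial>M)"
      unfolding set_lebesgue_integral_def
      by (rule Bochner_Integration.integral_cong) (auto simp: indicator_def)
    finally show "(\<integral>x\<in>C. indicator Bs x \<partial>M) = (\<integral>x\<in>C. p0 * indicator Y0 x + p1 * indicator Y1 x \<partial>M)" .
  next
    show "integrable M (indicator Bs :: 'a \<Rightarrow> real)" using mBs by (simp add: integrable_indicator_iff emeasure_eq_measure)
  next
    show "integrable M (\<lambda>x. p0 * indicator Y0 x + p1 * indicator Y1 x :: real)"
      using iY0 iY1 by simp
  next
    show "(\<lambda>x. p0 * indicator Y0 x + p1 * indicator Y1 x :: real) \<in> borel_measurable ?Hy" by (rule gH)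
  qed
  then show ?thesis unfolding Bs_def Y0_def Y1_def p0_def p1_def .
qed


theorem proposition2:
  fixes M :: "'a measure" and MZ :: "'z measure"
    and Y :: "'a \<Rightarrow> real" and Z :: "'a \<Rightarrow> 'z" and S :: "'a \<Rightarrow> real"
  assumes "prob_space M"
    and "Y \<in> borel_measurable M" and "\<forall>\<omega>\<in>space M. Y \<omega> \<in> {0, 1}"
    and "Z \<in> measurable M MZ"
    and "S \<in> borel_measurable M"
    and "cond_indep M MZ Z borel S borel Y"
    and "\<exists>a::real. \<P>(\<omega> in M. S \<omega> \<le> a \<bar> Y \<omega> = 1) \<noteq> \<P>(\<omega> in M. S \<omega> \<le> a \<bar> Y \<omega> = 0)"
  shows "\<forall>(MG :: 'g measure) (g :: 'z \<Rightarrow> 'g). g \<in> measurable MZ MG \<longrightarrow>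
           cond_indep M MZ Z borel S MG (g \<circ> Z) \<longrightarrow>
           cond_indep M MZ Z borel Y MG (g \<circ> Z)"
proof (intro allI impI)
  fix MG :: "'g measure" and g :: "'z \<Rightarrow> 'g"
  assume gm: "g \<in> measurable MZ MG" and ciS: "cond_indep M MZ Z borel S MG (g \<circ> Z)"
  interpret prob_space M by (rule assms(1))
  obtain a where pa: "\<P>(\<omega> in M. S \<omega> \<le> a \<bar> Y \<omega> = 1) \<noteq> \<P>(\<omega> in M. S \<omega> \<le> a \<bar> Y \<omega> = 0)"
    using assms(7) by blast
  define p0 where "p0 = \<P>(\<omega> in M. S \<omega> \<le> a \<bar> Y \<omega> = 0)"
  define p1 where "p1 = \<P>(\<omega> in M. S \<omega> \<le> a \<bar> Y \<omega> = 1)"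
  define Bs where "Bs = S -` {..a} \<inter> space M"
  define Y0 where "Y0 = Y -` {0} \<inter> space M"
  define Y1 where "Y1 = Y -` {1} \<inter> space M"
  have pd: "p1 - p0 \<noteq> 0" using pa unfolding p0_def p1_def by simp
  let ?G = "vimage_algebra (space M) (g \<circ> Z) MG"
  let ?Hy = "vimage_algebra (space M) Y borel"
  have gZ: "g \<circ> Z \<in> measurable M MG" by (rule measurable_comp[OF assms(4) gm])
  interpret G: sigma_finite_subalgebra M ?G using sfs[OF assms(1) gZ] .
  have mBs: "Bs \<in> sets M" unfolding Bs_def using measurable_sets[OF assms(5)] by simp
  have mY0: "Y0 \<in> sets M" unfolding Y0_def using measurable_sets[OF assms(2)] by simp
  have mY1: "Y1 \<in> sets M" unfolding Y1_def using measurable_sets[OF assms(2)] by simp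
  have iBs: "integrable M (indicator Bs :: 'a \<Rightarrow> real)" using mBs by (simp add: integrable_indicator_iff emeasure_eq_measure)
  define u where "u = real_cond_exp M ?G (indicator Bs)"
  have uint: "integrable M u" unfolding u_def by (rule G.real_cond_exp_int(1)[OF iBs])
  have uG: "u \<in> borel_measurable ?G" unfolding u_def by (rule borel_measurable_cond_exp)
  have stA: "AE x in M. real_cond_exp M ?Hy (indicator Bs) x = p0 * indicator Y0 x + p1 * indicator Y1 x"
    using stepA[OF assms(1,2,3,5), of a] unfolding Bs_def Y0_def Y1_def p0_def p1_def .
  have mAs: "Z -` A \<inter> space M \<in> sets M" if "A \<in> sets MZ" for A
    using measurable_sets[OF assms(4) that] .
  have i1: "(\<integral>x. indicator (Z -` A \<inter> space M) x * indicator Bs x \<partial>M)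
      = p0 * (\<integral>x. indicator (Z -` A \<inter> space M) x \<partial>M)
        + (p1 - p0) * (\<integral>x. indicator (Z -` A \<inter> space M) x * indicator Y1 x \<partial>M)"
    if A: "A \<in> sets MZ" for A
  proof -
    have "(\<integral>x. indicator (Z -` A \<inter> space M) x * indicator Bs x \<partial>M)
        = (\<integral>x. real_cond_exp M ?Hy (indicator Bs) x * indicator (Z -` A \<inter> space M) x \<partial>M)"
      unfolding Bs_def by (rule L_int[OF assms(1,4,5,2,6) A]) simp
    also have "\<dots> = (\<integral>x. (p0 * indicator Y0 x + p1 * indicator Y1 x) * indicator (Z -` A \<inter> space M) x \<partial>M)"
      by (rule integral_cong_AE) (use stA mY0 mY1 mAs[OF A] in auto)
    also have "\<dots> = (\<integral>x. p0 * indicator (Z -` A \<inter> space M) x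
        + (p1 - p0) * (indicator (Z -` A \<inter> space M) x * indicator Y1 x) \<partial>M)"
      by (rule Bochner_Integration.integral_cong)
         (use assms(3) in \<open>auto simp: indicator_def Y0_def Y1_def algebra_simps\<close>)
    also have "\<dots> = p0 * (\<integral>x. indicator (Z -` A \<inter> space M) x \<partial>M)
        + (p1 - p0) * (\<integral>x. indicator (Z -` A \<inter> space M) x * indicator Y1 x \<partial>M)"
      using mAs[OF A] int_ind2[OF assms(1) mAs[OF A] mY1]
      by (simp add: integrable_indicator_iff emeasure_eq_measure)
    finally show ?thesis .
  qed
  have i2: "(\<integral>x. indicator (Z -` A \<inter> space M) x * indicator Bs x \<partial>M)
      = (\<integral>x. u x * indicator (Z -` A \<inter> space M) x \<partial>M)"
    if A: "A \<in> sets MZ" for A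
    unfolding Bs_def u_def by (rule L_int[OF assms(1,4,5) gZ ciS A]) simp
  define w where "w = (\<lambda>x. (u x - p0) / (p1 - p0))"
  have wG: "w \<in> borel_measurable ?G" unfolding w_def using uG
    by (intro borel_measurable_divide borel_measurable_diff borel_measurable_const)
  have wint: "integrable M w" unfolding w_def using uint by simp
  have key: "(\<integral>x. indicator (Z -` A \<inter> space M) x * indicator Y1 x \<partial>M)
      = (\<integral>x. indicator (Z -` A \<inter> space M) x * w x \<partial>M)"
    if A: "A \<in> sets MZ" for A
  proof -
    let ?iA = "indicator (Z -` A \<inter> space M) :: 'a \<Rightarrow> real"
    have iA: "integrable M ?iA" using mAs[OF A] by (simp add: integrable_indicator_iff emeasure_eq_measure)
    have uA: "integrable M (\<lambda>x. u x * ?iA x)" by (rule integrable_real_mult_indicator[OF mAs[OF A] uint])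
    have "(\<integral>x. ?iA x * w x \<partial>M) = (\<integral>x. (u x * ?iA x - p0 * ?iA x) / (p1 - p0) \<partial>M)"
      by (rule Bochner_Integration.integral_cong) (use pd in \<open>auto simp: w_def field_simps\<close>)
    also have "\<dots> = ((\<integral>x. u x * ?iA x \<partial>M) - p0 * (\<integral>x. ?iA x \<partial>M)) / (p1 - p0)"
      using iA uA by simp
    also have "\<dots> = (\<integral>x. ?iA x * indicator Y1 x \<partial>M)"
      using i1[OF A] i2[OF A] pd by (simp add: field_simps)
    finally show ?thesis by simp
  qed
  show "cond_indep M MZ Z borel Y MG (g \<circ> Z)"
    unfolding cond_indep_def
  proof (intro ballI)
    fix A B assume A: "A \<in> sets MZ" and B: "B \<in> sets (borel :: real measure)"
    let ?iA = "indicator (Z -` A \<inter> space M) :: 'a \<Rightarrow> real"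
    note core = L_core[OF assms(1,4) gm _ _ _ _ A]
    consider "0 \<in> B" "1 \<in> B" | "0 \<in> B" "1 \<notin> B" | "0 \<notin> B" "1 \<in> B" | "0 \<notin> B" "1 \<notin> B" by blast
    then show "AE \<omega> in M. real_cond_exp M ?G
             (\<lambda>\<omega>. ?iA \<omega> * indicator (Y -` B \<inter> space M) \<omega>) \<omega>
          = real_cond_exp M ?G ?iA \<omega> * real_cond_exp M ?G (indicator (Y -` B \<inter> space M)) \<omega>"
    proof cases
      case 1
      then have T: "Y -` B \<inter> space M = space M" using assms(3) by auto
      show ?thesis unfolding T
        by (rule core[where w="\<lambda>_. 1"])
           (auto intro!: Bochner_Integration.integral_cong simp: indicator_def)
    next
      case 2
      then have T: "Y -` B \<inter> space M = Y0" using assms(3) unfolding Y0_def by auto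
      show ?thesis unfolding T
      proof (rule core[where w="\<lambda>x. 1 - w x"])
        fix A' assume A': "A' \<in> sets MZ"
        have "(\<integral>x. indicator (Z -` A' \<inter> space M) x * indicator Y0 x \<partial>M)
           = (\<integral>x. (indicator (Z -` A' \<inter> space M) x :: real) - indicator (Z -` A' \<inter> space M) x * indicator Y1 x \<partial>M)"
          by (rule Bochner_Integration.integral_cong)
             (use assms(3) in \<open>auto simp: Y0_def Y1_def split: split_indicator\<close>)
        also have "\<dots> = (\<integral>x. indicator (Z -` A' \<inter> space M) x \<partial>M) - (\<integral>x. indicator (Z -` A' \<inter> space M) x * indicator Y1 x \<partial>M)"
          using mAs[OF A'] int_ind2[OF assms(1) mAs[OF A'] mY1]
          by (simp add: integrable_indicator_iff emeasure_eq_measure)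
        also have "\<dots> = (\<integral>x. indicator (Z -` A' \<inter> space M) x \<partial>M) - (\<integral>x. indicator (Z -` A' \<inter> space M) x * w x \<partial>M)"
          using key[OF A'] by simp
        also have "\<dots> = (\<integral>x. (indicator (Z -` A' \<inter> space M) x :: real) - w x * indicator (Z -` A' \<inter> space M) x \<partial>M)"
          using mAs[OF A'] integrable_real_mult_indicator[OF mAs[OF A'] wint]
          by (subst Bochner_Integration.integral_diff)
             (auto simp: integrable_indicator_iff emeasure_eq_measure mult.commute)
        also have "\<dots> = (\<integral>x. indicator (Z -` A' \<inter> space M) x * (1 - w x) \<partial>M)"
          by (rule Bochner_Integration.integral_cong) (auto simp: algebra_simps)
        finally show "(\<integral>x. indicator (Z -` A' \<inter> space M) x * indicator Y0 x \<partial>M)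
           = (\<integral>x. indicator (Z -` A' \<inter> space M) x * (1 - w x) \<partial>M)" .
      qed (use mY0 wG wint in auto)
    next
      case 3
      then have T: "Y -` B \<inter> space M = Y1" using assms(3) unfolding Y1_def by auto
      show ?thesis unfolding T
        by (rule core[where w=w]) (use mY1 wG wint key in auto)
    next
      case 4
      then have T: "Y -` B \<inter> space M = {}" using assms(3) by auto
      show ?thesis unfolding T
        by (rule core[where w="\<lambda>_. 0"]) auto
    qed
  qed
qed

end
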